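(* Let $b_r\ge0$ and $b=b_r\vee b^*$. Then $(\mu-\alpha G(x))\mathbf 1_{\{x>b\}}\le0$ for all $x\ge0$, and if $b_r>b^*$ then $\lim_{x\nearrow b}G''(x)>0$. Likewise, with $b=b_r\vee b^{**}$: $(\mu-\alpha H(x))\mathbf 1_{\{x>b\}}\le0$ for all $x\ge0$, and if $b_r>b^{**}$ then $\lim_{x\nearrow b}H''(x)>0$.
   Context: Fix parameters $\mu>0$, $\sigma>0$, $\alpha>0$ and $k>1$. Set $r_1:=-\frac{\mu}{\sigma^2}+\sqrt{\frac{\mu^2}{\sigma^4}+\frac{2\alpha}{\sigma^2}}$ and $r_2:=-\frac{\mu}{\sigma^2}-\sqrt{\frac{\mu^2}{\sigma^4}+\frac{2\alpha}{\sigma^2}}$ (so $r_2<0<r_1$ and $r_2^2>r_1^2$). Let $b^*:=\frac{\log(r_2^2/r_1^2)}{r_1-r_2}>0$ and let $b^{**}>0$ be the unique positive solution of $r_1e^{-r_2b}-r_2e^{-r_1b}=k(r_1-r_2)$. Write $G(x)=G(x;b_r)$ and $H(x)=H(x;b_r)$, where: with $b=b_r\vee b^*$, $G(x;b_r):=\frac{e^{r_1x}-e^{r_2x}}{r_1e^{r_1b}-r_2e^{r_2b}}$ for $0\le x\le b$ and $G(x;b_r):=x-b+\frac{e^{r_1b}-e^{r_2b}}{r_1e^{r_1b}-r_2e^{r_2b}}$ for $x>b$; with $b=b_r\vee b^{**}$, $H(x;b_r):=\frac{1}{e^{r_1b}-e^{r_2b}}\Big(\frac{1-ke^{r_2b}}{r_1}e^{r_1x}-\frac{1-ke^{r_1b}}{r_2}e^{r_2x}\Big)$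 for $0\le x\le b$ and $H(x;b_r):=x-b+\frac{1}{e^{r_1b}-e^{r_2b}}\Big(\frac{1-ke^{r_2b}}{r_1}e^{r_1b}-\frac{1-ke^{r_1b}}{r_2}e^{r_2b}\Big)$ for $x>b$. *)

theory Defs
  imports "HOL-Analysis.Analysis"
begin

definition r1 :: "real \<Rightarrow> real \<Rightarrow> real \<Rightarrow> real" where
  "r1 \<mu> \<sigma> \<alpha> = - \<mu> / \<sigma>\<^sup>2 + sqrt (\<mu>\<^sup>2 / \<sigma>^4 + 2 * \<alpha> / \<sigma>\<^sup>2)"

definition r2 :: "real \<Rightarrow> real \<Rightarrow> real \<Rightarrow> real" where
  "r2 \<mu> \<sigma> \<alpha> = - \<mu> / \<sigma>\<^sup>2 - sqrt (\<mu>\<^sup>2 / \<sigma>^4 + 2 * \<alpha> / \<sigma>\<^sup>2)"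

definition bstar :: "real \<Rightarrow> real \<Rightarrow> real \<Rightarrow> real" where
  "bstar \<mu> \<sigma> \<alpha> =
     ln ((r2 \<mu> \<sigma> \<alpha>)\<^sup>2 / (r1 \<mu> \<sigma> \<alpha>)\<^sup>2) / (r1 \<mu> \<sigma> \<alpha> - r2 \<mu> \<sigma> \<alpha>)"

definition bstarstar :: "real \<Rightarrow> real \<Rightarrow> real \<Rightarrow> real \<Rightarrow> real" where
  "bstarstar \<mu> \<sigma> \<alpha> k = (THE b. b > 0 \<and>
     r1 \<mu> \<sigma> \<alpha> * exp (- r2 \<mu> \<sigma> \<alpha> * b) - r2 \<mu> \<sigma> \<alpha> * exp (- r1 \<mu> \<sigma> \<alpha> * b)
       = k * (r1 \<mu> \<sigma> \<alpha> - r2 \<mu> \<sigma> \<alpha>))"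

definition Gfun :: "real \<Rightarrow> real \<Rightarrow> real \<Rightarrow> real \<Rightarrow> real \<Rightarrow> real" where
  "Gfun \<mu> \<sigma> \<alpha> br x =
    (let p = r1 \<mu> \<sigma> \<alpha>; q = r2 \<mu> \<sigma> \<alpha>; b = max br (bstar \<mu> \<sigma> \<alpha>) in
     if x \<le> b then (exp (p * x) - exp (q * x)) / (p * exp (p * b) - q * exp (q * b))
     else x - b + (exp (p * b) - exp (q * b)) / (p * exp (p * b) - q * exp (q * b)))"

definition Hfun :: "real \<Rightarrow> real \<Rightarrow> real \<Rightarrow> real \<Rightarrow> real \<Rightarrow> real \<Rightarrow> real" where
  "Hfun \<mu> \<sigma> \<alpha> k br x =
    (let p = r1 \<mu> \<sigma> \<alpha>; q = r2 \<mu> \<sigma> \<alpha>; b = max br (bstarstar \<mu> \<sigma> \<alpha> k) in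
     if x \<le> b then (1 / (exp (p * b) - exp (q * b))) *
          ((1 - k * exp (q * b)) / p * exp (p * x) - (1 - k * exp (p * b)) / q * exp (q * x))
     else x - b + (1 / (exp (p * b) - exp (q * b))) *
          ((1 - k * exp (q * b)) / p * exp (p * b) - (1 - k * exp (p * b)) / q * exp (q * b)))"

end

theory Submission
  imports Defs
begin

lemma roots:
  fixes \<mu> \<sigma> \<alpha> :: real
  assumes "\<mu> > 0" "\<sigma> > 0" "\<alpha> > 0"
  shows "r1 \<mu> \<sigma> \<alpha> > 0" "r2 \<mu> \<sigma> \<alpha> < 0" "r1 \<mu> \<sigma> \<alpha> + r2 \<mu> \<sigma> \<alpha> < 0"
    "\<alpha> = \<sigma>\<^sup>2/2 * (r1 \<mu> \<sigma> \<alpha>)\<^sup>2 + \<mu> * r1 \<mu> \<sigma> \<alpha>"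
    "\<alpha> = \<sigma>\<^sup>2/2 * (r2 \<mu> \<sigma> \<alpha>)\<^sup>2 + \<mu> * r2 \<mu> \<sigma> \<alpha>"
proof -
  define s where "s = sqrt (\<mu>\<^sup>2 / \<sigma>^4 + 2 * \<alpha> / \<sigma>\<^sup>2)"
  have pos: "\<mu>\<^sup>2 / \<sigma>^4 + 2 * \<alpha> / \<sigma>\<^sup>2 > 0" using assms by (simp add: add_pos_pos)
  have s2: "s\<^sup>2 = \<mu>\<^sup>2 / \<sigma>^4 + 2 * \<alpha> / \<sigma>\<^sup>2" unfolding s_def using pos by simp
  have s0: "s > 0" unfolding s_def using pos by simp
  have "(\<mu>/\<sigma>\<^sup>2)\<^sup>2 < s\<^sup>2" using s2 assms by (simp add: power_divide power2_eq_square[symmetric] power_mult[symmetric]) 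
  hence "\<mu>/\<sigma>\<^sup>2 < s" by (rule power_less_imp_less_base) (use s0 in auto)
  thus "r1 \<mu> \<sigma> \<alpha> > 0" unfolding r1_def s_def[symmetric] by simp
  have "\<mu>/\<sigma>\<^sup>2 > 0" using assms by simp
  then show "r2 \<mu> \<sigma> \<alpha> < 0" unfolding r2_def s_def[symmetric] using s0 by linarith
  show "r1 \<mu> \<sigma> \<alpha> + r2 \<mu> \<sigma> \<alpha> < 0" unfolding r1_def r2_def s_def[symmetric] using assms by simp
  have "\<sigma>^4 = (\<sigma>\<^sup>2)\<^sup>2" by (simp add: power_mult[symmetric])
  hence h1: "\<mu>\<^sup>2 / \<sigma>^4 = (\<mu>/\<sigma>\<^sup>2)\<^sup>2" by (simp add: power_divide)
  have h2: "\<sigma>\<^sup>2*(\<mu>/\<sigma>\<^sup>2)\<^sup>2 = \<mu>\<^sup>2/\<sigma>\<^sup>2" using assms by (simp add: power2_eq_square)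
  have h3: "\<sigma>\<^sup>2*(2 * \<alpha> / \<sigma>\<^sup>2) = 2*\<alpha>" using assms by simp
  have e: "\<sigma>\<^sup>2 * s\<^sup>2 = \<mu>\<^sup>2/\<sigma>\<^sup>2 + 2*\<alpha>" unfolding s2 h1 distrib_left h2 h3 ..
  define m where "m = \<mu>/\<sigma>\<^sup>2"
  have mu: "\<mu> = \<sigma>\<^sup>2*m" unfolding m_def using assms by simp
  have e': "\<sigma>\<^sup>2 * s\<^sup>2 = \<sigma>\<^sup>2*m\<^sup>2 + 2*\<alpha>" using e assms unfolding m_def by (simp add: power2_eq_square)
  have k1: "\<sigma>\<^sup>2/2*(s-m)\<^sup>2 + \<sigma>\<^sup>2*m*(s-m) = (\<sigma>\<^sup>2* s\<^sup>2 - \<sigma>\<^sup>2*m\<^sup>2)/2"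
    by (simp add: power2_eq_square algebra_simps add_divide_distrib diff_divide_distrib)
  have k2: "\<sigma>\<^sup>2/2*(-m-s)\<^sup>2 + \<sigma>\<^sup>2*m*(-m-s) = (\<sigma>\<^sup>2* s\<^sup>2 - \<sigma>\<^sup>2*m\<^sup>2)/2"
    by (simp add: power2_eq_square algebra_simps add_divide_distrib diff_divide_distrib)
  have r1e: "r1 \<mu> \<sigma> \<alpha> = s - m" unfolding r1_def s_def[symmetric] m_def by simp
  have r2e: "r2 \<mu> \<sigma> \<alpha> = -m - s" unfolding r2_def s_def[symmetric] m_def by simp
  show "\<alpha> = \<sigma>\<^sup>2/2 * (r1 \<mu> \<sigma> \<alpha>)\<^sup>2 + \<mu> * r1 \<mu> \<sigma> \<alpha>"
    proof -
    have "\<mu> * r1 \<mu> \<sigma> \<alpha> = \<mu>*(s - m)" by (simp only: r1e)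
    also have "\<dots> = \<sigma>\<^sup>2*m*(s - m)" using mu by simp
    finally have Y: "\<mu> * r1 \<mu> \<sigma> \<alpha> = \<sigma>\<^sup>2*m*(s - m)" .
    show ?thesis unfolding Y unfolding r1e k1 e' by simp
  qed
  show "\<alpha> = \<sigma>\<^sup>2/2 * (r2 \<mu> \<sigma> \<alpha>)\<^sup>2 + \<mu> * r2 \<mu> \<sigma> \<alpha>"
    proof -
    have "\<mu> * r2 \<mu> \<sigma> \<alpha> = \<mu>*(-m - s)" by (simp only: r2e)
    also have "\<dots> = \<sigma>\<^sup>2*m*(-m - s)" using mu by simp
    finally have Y: "\<mu> * r2 \<mu> \<sigma> \<alpha> = \<sigma>\<^sup>2*m*(-m - s)" .
    show ?thesis unfolding Y unfolding r2e k2 e' by simp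
  qed
qed

lemma deriv1:
  fixes F :: "real \<Rightarrow> real"
  assumes "\<forall>y<b. F y = A*exp(p*y)+B*exp(q*y)" "x<b"
  shows "deriv F x = A*p*exp(p*x)+B*q*exp(q*x)"
proof -
  have "((\<lambda>y. A*exp(p*y)+B*exp(q*y)) has_field_derivative A*p*exp(p*x)+B*q*exp(q*x)) (at x)"
    by (auto intro!: derivative_eq_intros)
  hence "(F has_field_derivative A*p*exp(p*x)+B*q*exp(q*x)) (at x)"
    by (rule has_field_derivative_transform_within_open[where S="{..<b}"]) (use assms in auto)
  thus ?thesis by (rule DERIV_imp_deriv)
qed

lemma deriv2:
  fixes F :: "real \<Rightarrow> real"
  assumes "\<forall>y<b. F y = A*exp(p*y)+B*exp(q*y)" "x<b"
  shows "deriv (deriv F) x = A*p\<^sup>2*exp(p*x)+B*q\<^sup>2*exp(q*x)"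
proof -
  have "\<forall>y<b. deriv F y = (A*p)*exp(p*y)+(B*q)*exp(q*y)" using deriv1[OF assms(1)] by auto
  from deriv1[OF this assms(2)] show ?thesis by (simp add: power2_eq_square mult.assoc)
qed

lemma lim2:
  fixes F :: "real \<Rightarrow> real"
  assumes "\<forall>y<b. F y = A*exp(p*y)+B*exp(q*y)"
  shows "((\<lambda>x. deriv (deriv F) x) \<longlongrightarrow> A*p\<^sup>2*exp(p*b)+B*q\<^sup>2*exp(q*b)) (at_left b)"
proof -
  have ev: "eventually (\<lambda>x. x < b) (at_left b)" using eventually_at_left_real[of "b-1" b] by (auto elim: eventually_mono)
  have "((\<lambda>x. A*p\<^sup>2*exp(p*x)+B*q\<^sup>2*exp(q*x)) \<longlongrightarrow> A*p\<^sup>2*exp(p*b)+B*q\<^sup>2*exp(q*b)) (at_left b)"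
    by (auto intro!: tendsto_eq_intros)
  thus ?thesis
    by (rule Lim_transform_eventually) (use ev deriv2[OF assms] in \<open>auto elim: eventually_mono\<close>)
qed

lemma phi_mono:
  fixes p q :: real
  assumes "p > 0" "q < 0" "p + q < 0" "0 \<le> x" "x < y"
  shows "p*exp(-q*x) - q*exp(-p*x) < p*exp(-q*y) - q*exp(-p*y)"
proof (rule DERIV_pos_imp_increasing_open[OF assms(5), where f="\<lambda>b. p*exp(-q*b) - q*exp(-p*b)"])
  fix t assume t: "x < t" "t < y"
  have "exp(-p*t) < exp(-q*t)" using t assms by (simp add: mult_strict_right_mono)
  moreover have "-q*p > 0" using assms by (simp add: mult_neg_pos)
  ultimately have "(-q*p)*(exp(-q*t) - exp(-p*t)) > 0" by (intro mult_pos_pos) (use assms in auto)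
  moreover have "(-q*p)*(exp(-q*t) - exp(-p*t)) = -q*p*exp(-q*t) - q*(-p)*exp(-p*t)" by (simp add: algebra_simps)
  ultimately have "-q*p*exp(-q*t) - q*(-p)*exp(-p*t) > 0" by simp
  moreover have "((\<lambda>b. p*exp(-q*b) - q*exp(-p*b)) has_real_derivative -q*p*exp(-q*t) - q*(-p)*exp(-p*t)) (at t)"
    by (auto intro!: derivative_eq_intros)
  ultimately show "\<exists>d. ((\<lambda>b. p*exp(-q*b) - q*exp(-p*b)) has_real_derivative d) (at t) \<and> d > 0" by blast
qed (auto intro!: continuous_intros)


lemma bss:
  fixes p q k :: real
  assumes "p > 0" "q < 0" "p + q < 0" "k > 1"
  defines "\<phi> \<equiv> \<lambda>b. p*exp(-q*b) - q*exp(-p*b)"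
  shows "\<exists>!b. b > 0 \<and> p*exp(-q*b) - q*exp(-p*b) = k*(p-q)"
proof -
  define B where "B = k*(p-q)/(-p*q)"
  have pq: "-p*q > 0" using assms by (simp add: mult_pos_neg)
  have B0: "B > 0" unfolding B_def using assms pq by (intro divide_pos_pos) auto
  have f0: "\<phi> 0 \<le> k*(p-q)" unfolding \<phi>_def using assms by simp
  have "exp(-q*B) \<ge> 1 + (-q*B)" by (rule exp_ge_add_one_self)
  hence "p*exp(-q*B) \<ge> p*(1 - q*B)" using assms by (simp add: mult_left_mono)
  moreover have "p*(1-q*B) \<ge> -p*q*B" using assms by (simp add: algebra_simps)
  moreover have "-p*q*B = k*(p-q)" unfolding B_def using pq assms by simp
  moreover have "- q*exp(-p*B) > 0" using assms(2) by (simp add: mult_neg_pos)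
  ultimately have fB: "k*(p-q) \<le> \<phi> B" unfolding \<phi>_def by linarith
  have "continuous_on {0..B} \<phi>" unfolding \<phi>_def by (auto intro!: continuous_intros)
  from IVT'[of \<phi> 0 "k*(p-q)" B, OF f0 fB _ this] B0
  obtain b where b: "0 \<le> b" "\<phi> b = k*(p-q)" by auto
  have "b \<noteq> 0" using b assms unfolding \<phi>_def by auto
  hence bp: "b > 0" using b by simp
  show ?thesis
  proof (rule ex1I[of _ b])
    show "b > 0 \<and> p*exp(-q*b) - q*exp(-p*b) = k*(p-q)" using bp b unfolding \<phi>_def by simp
    fix c assume c: "c > 0 \<and> p*exp(-q*c) - q*exp(-p*c) = k*(p-q)"
    show "c = b"
    proof (rule ccontr)
      assume "c \<noteq> b"
      hence "c < b \<or> b < c" by auto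
      thus False using phi_mono[OF assms(1-3), of c b] phi_mono[OF assms(1-3), of b c] c b bp
        unfolding \<phi>_def by auto
    qed
  qed
qed


lemma lin_aux: "(w::real)*(a*X - b*Y) = (w*a)*X + (-w*b)*Y"
  by (simp add: algebra_simps)

lemma aux2:
  fixes w a b p q X Y :: real
  assumes "p \<noteq> 0" "q \<noteq> 0"
  shows "(w*(a/p))*p\<^sup>2*X + (-w*(b/q))*q\<^sup>2*Y = (p*a*X - q*b*Y)*w"
proof -
  have 1: "(a/p)*p\<^sup>2 = p*a" and 2: "(b/q)*q\<^sup>2 = q*b" using assms by (simp_all add: power2_eq_square)
  have "(w*(a/p))*p\<^sup>2*X + (-w*(b/q))*q\<^sup>2*Y = w*((a/p)*p\<^sup>2)*X - w*((b/q)*q\<^sup>2)*Y"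
    by (simp add: algebra_simps)
  also have "\<dots> = (p*a*X - q*b*Y)*w" unfolding 1 2 by (simp add: algebra_simps)
  finally show ?thesis .
qed

lemma keyG:
  fixes p q b :: real
  assumes "p > 0" "q \<noteq> 0" "ln(q\<^sup>2/p\<^sup>2) \<le> b*(p-q)"
  shows "q\<^sup>2*exp(q*b) \<le> p\<^sup>2*exp(p*b)"
proof -
  have pos: "q\<^sup>2/p\<^sup>2 > 0" using assms by simp
  have "q\<^sup>2/p\<^sup>2 = exp(ln(q\<^sup>2/p\<^sup>2))" using pos by simp
  also have "\<dots> \<le> exp(b*(p-q))" using assms(3) by simp
  finally have 1: "q\<^sup>2/p\<^sup>2 \<le> exp(b*(p-q))" .
  have 2: "exp(p*b) = exp(b*(p-q))*exp(q*b)" by (simp add: exp_add[symmetric] algebra_simps)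
  have "q\<^sup>2*exp(q*b) = p\<^sup>2*((q\<^sup>2/p\<^sup>2)*exp(q*b))" using assms by simp
  also have "\<dots> \<le> p\<^sup>2*(exp(b*(p-q))*exp(q*b))"
    using 1 by (intro mult_left_mono mult_right_mono) auto
  finally show ?thesis using 2 by simp
qed

lemma keyG_strict:
  fixes p q b :: real
  assumes "p > 0" "q \<noteq> 0" "ln(q\<^sup>2/p\<^sup>2) < b*(p-q)"
  shows "q\<^sup>2*exp(q*b) < p\<^sup>2*exp(p*b)"
proof -
  have pos: "q\<^sup>2/p\<^sup>2 > 0" using assms by simp
  have "q\<^sup>2/p\<^sup>2 = exp(ln(q\<^sup>2/p\<^sup>2))" using pos by simp
  also have "\<dots> < exp(b*(p-q))" using assms(3) by simp
  finally have 1: "q\<^sup>2/p\<^sup>2 < exp(b*(p-q))" .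
  have 2: "exp(p*b) = exp(b*(p-q))*exp(q*b)" by (simp add: exp_add[symmetric] algebra_simps)
  have "q\<^sup>2*exp(q*b) = p\<^sup>2*((q\<^sup>2/p\<^sup>2)*exp(q*b))" using assms by simp
  also have "\<dots> < p\<^sup>2*(exp(b*(p-q))*exp(q*b))"
    using 1 assms by (intro mult_strict_left_mono mult_strict_right_mono) auto
  finally show ?thesis using 2 by simp
qed

lemma algG:
  fixes p q E1 E2 \<alpha> \<mu> \<sigma> :: real
  assumes ap: "\<alpha> = \<sigma>\<^sup>2/2 * p\<^sup>2 + \<mu> * p" and aq: "\<alpha> = \<sigma>\<^sup>2/2 * q\<^sup>2 + \<mu> * q"
  shows "\<alpha>*(E1 - E2) - \<mu>*(p*E1 - q*E2) = \<sigma>\<^sup>2/2*(p\<^sup>2*E1 - q\<^sup>2*E2)"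
proof -
  have "\<alpha>*(E1 - E2) = \<alpha>*E1 - \<alpha>*E2" by (simp add: algebra_simps)
  also have "\<dots> = (\<sigma>\<^sup>2/2 * p\<^sup>2 + \<mu> * p)*E1 - (\<sigma>\<^sup>2/2 * q\<^sup>2 + \<mu> * q)*E2"
    by (simp only: ap[symmetric] aq[symmetric])
  finally show ?thesis by (simp add: algebra_simps)
qed

lemma algH:
  fixes p q E1 E2 \<alpha> \<mu> \<sigma> k :: real
  assumes ap: "\<alpha> = \<sigma>\<^sup>2/2 * p\<^sup>2 + \<mu> * p" and aq: "\<alpha> = \<sigma>\<^sup>2/2 * q\<^sup>2 + \<mu> * q"
    and p: "p \<noteq> 0" and q: "q \<noteq> 0" and W: "E1 - E2 \<noteq> 0"
  shows "\<alpha>*((1/(E1-E2))*((1-k*E2)/p*E1 - (1-k*E1)/q*E2)) - \<mu>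
       = \<sigma>\<^sup>2/2*((p*(1-k*E2)*E1 - q*(1-k*E1)*E2)/(E1-E2))"
proof -
  define u where "u = (1-k*E2)/p*E1"
  define v where "v = (1-k*E1)/q*E2"
  have pu: "p*u = (1-k*E2)*E1" unfolding u_def using p by simp
  have qv: "q* v = (1-k*E1)*E2" unfolding v_def using q by simp
  have "\<alpha>*(u - v) = \<alpha>*u - \<alpha>* v" by (simp add: algebra_simps)
  also have "\<dots> = (\<sigma>\<^sup>2/2 * p\<^sup>2 + \<mu> * p)*u - (\<sigma>\<^sup>2/2 * q\<^sup>2 + \<mu> * q)* v"
    by (simp only: ap[symmetric] aq[symmetric])
  also have "\<dots> = \<sigma>\<^sup>2/2*(p*(p*u) - q*(q* v)) + \<mu>*(p*u - q* v)"
    by (simp add: algebra_simps power2_eq_square)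
  also have "\<dots> = \<sigma>\<^sup>2/2*(p*(1-k*E2)*E1 - q*(1-k*E1)*E2) + \<mu>*(E1-E2)"
    unfolding pu qv by (simp add: algebra_simps)
  finally have e: "\<alpha>*(u - v) = \<sigma>\<^sup>2/2*(p*(1-k*E2)*E1 - q*(1-k*E1)*E2) + \<mu>*(E1-E2)" .
  have "\<alpha>*((1/(E1-E2))*(u - v)) - \<mu> = (\<alpha>*(u-v) - \<mu>*(E1-E2))/(E1-E2)"
    using W by (simp add: field_simps)
  also have "\<dots> = \<sigma>\<^sup>2/2*((p*(1-k*E2)*E1 - q*(1-k*E1)*E2)/(E1-E2))"
    unfolding e by simp
  finally show ?thesis unfolding u_def v_def .
qed


theorem mainTheorem9:
  fixes \<mu> \<sigma> \<alpha> k br :: real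
  assumes "\<mu> > 0" and "\<sigma> > 0" and "\<alpha> > 0" and "k > 1" and "br \<ge> 0"
  shows "(\<forall>x\<ge>0. x > max br (bstar \<mu> \<sigma> \<alpha>) \<longrightarrow> \<mu> - \<alpha> * Gfun \<mu> \<sigma> \<alpha> br x \<le> 0)
       \<and> (br > bstar \<mu> \<sigma> \<alpha> \<longrightarrow>
            (\<exists>L>0. ((\<lambda>x. deriv (deriv (Gfun \<mu> \<sigma> \<alpha> br)) x) \<longlongrightarrow> L)
                      (at_left (max br (bstar \<mu> \<sigma> \<alpha>)))))
       \<and> (\<forall>x\<ge>0. x > max br (bstarstar \<mu> \<sigma> \<alpha> k) \<longrightarrow> \<mu> - \<alpha> * Hfun \<mu> \<sigma> \<alpha> k br x \<le> 0)
       \<and> (br > bstarstar \<mu> \<sigma> \<alpha> k \<longrightarrow>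
            (\<exists>L>0. ((\<lambda>x. deriv (deriv (Hfun \<mu> \<sigma> \<alpha> k br)) x) \<longlongrightarrow> L)
                      (at_left (max br (bstarstar \<mu> \<sigma> \<alpha> k)))))"
proof -
  define p where "p = r1 \<mu> \<sigma> \<alpha>"
  define q where "q = r2 \<mu> \<sigma> \<alpha>"
  have p0: "p > 0" and q0: "q < 0" and pq: "p + q < 0"
    and ap: "\<alpha> = \<sigma>\<^sup>2/2 * p\<^sup>2 + \<mu> * p" and aq: "\<alpha> = \<sigma>\<^sup>2/2 * q\<^sup>2 + \<mu> * q"
    using roots[OF assms(1-3)] unfolding p_def q_def by auto
  have pmq: "p - q > 0" using p0 q0 by simp
  have "p\<^sup>2 < q\<^sup>2"
  proof -
    have "p^2 < (-q)^2" using p0 pq by (intro power_strict_mono) auto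
    thus ?thesis by simp
  qed
  hence "1 < q\<^sup>2/p\<^sup>2" using p0 by simp
  hence lnpos: "ln(q\<^sup>2/p\<^sup>2) > 0" by simp
  define B1 where "B1 = bstar \<mu> \<sigma> \<alpha>"
  have B1e: "B1 = ln(q\<^sup>2/p\<^sup>2)/(p-q)" unfolding B1_def bstar_def p_def q_def ..
  have B1pos: "B1 > 0" unfolding B1e using lnpos pmq by simp
  define b where "b = max br B1"
  have bB1: "b \<ge> B1" and b0: "b > 0" unfolding b_def using B1pos by auto
  define E1 where "E1 = exp(p*b)"
  define E2 where "E2 = exp(q*b)"
  define D where "D = p*E1 - q*E2"
  have E1p: "E1 > 0" and E2p: "E2 > 0" unfolding E1_def E2_def by auto
  have Dp: "D > 0" unfolding D_def using E1p E2p p0 q0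
    by (smt (verit) mult_pos_pos mult_neg_pos)
  have lnle: "ln(q\<^sup>2/p\<^sup>2) \<le> b*(p-q)" using bB1 pmq unfolding B1e by (simp add: pos_divide_le_eq)
  have kG: "q\<^sup>2*E2 \<le> p\<^sup>2*E1" unfolding E1_def E2_def using keyG[OF p0 _ lnle] q0 by simp
  have Gx: "Gfun \<mu> \<sigma> \<alpha> br x = x - b + (E1 - E2)/D" if "x > b" for x
    using that unfolding Gfun_def Let_def p_def[symmetric] q_def[symmetric] B1_def[symmetric]
      b_def[symmetric] E1_def[symmetric] E2_def[symmetric] D_def[symmetric] by simp
  have Gy: "\<forall>y<b. Gfun \<mu> \<sigma> \<alpha> br y = (1/D)*exp(p*y) + (-1/D)*exp(q*y)"
    unfolding Gfun_def Let_def p_def[symmetric] q_def[symmetric] B1_def[symmetric]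
      b_def[symmetric] E1_def[symmetric] E2_def[symmetric] D_def[symmetric]
    by (simp add: diff_divide_distrib)
  have GG: "\<alpha>*((E1 - E2)/D) - \<mu> = \<sigma>\<^sup>2/2*(p\<^sup>2*E1 - q\<^sup>2*E2)/D"
  proof -
    have "\<alpha>*((E1 - E2)/D) - \<mu> = (\<alpha>*(E1 - E2) - \<mu>*D)/D" using Dp by (simp add: field_simps)
    also have "\<dots> = \<sigma>\<^sup>2/2*(p\<^sup>2*E1 - q\<^sup>2*E2)/D" unfolding D_def algG[OF ap aq] ..
    finally show ?thesis .
  qed
  have part1: "\<forall>x\<ge>0. x > max br (bstar \<mu> \<sigma> \<alpha>) \<longrightarrow> \<mu> - \<alpha> * Gfun \<mu> \<sigma> \<alpha> br x \<le> 0"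
  proof (intro allI impI)
    fix x :: real assume "x \<ge> 0" "x > max br (bstar \<mu> \<sigma> \<alpha>)"
    hence xb: "x > b" unfolding b_def B1_def by simp
    have "\<sigma>\<^sup>2/2*(p\<^sup>2*E1 - q\<^sup>2*E2)/D \<ge> 0" using kG Dp by simp
    hence "\<alpha>*((E1 - E2)/D) \<ge> \<mu>" using GG by simp
    moreover have "\<alpha>*(x - b) \<ge> 0" using xb assms(3) by simp
    ultimately show "\<mu> - \<alpha> * Gfun \<mu> \<sigma> \<alpha> br x \<le> 0" unfolding Gx[OF xb] by (simp add: algebra_simps)
  qed
  have part2: "br > bstar \<mu> \<sigma> \<alpha> \<longrightarrow>
            (\<exists>L>0. ((\<lambda>x. deriv (deriv (Gfun \<mu> \<sigma> \<alpha> br)) x) \<longlongrightarrow> L)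
                      (at_left (max br (bstar \<mu> \<sigma> \<alpha>))))"
  proof
    assume "br > bstar \<mu> \<sigma> \<alpha>"
    hence bb: "b > B1" unfolding b_def B1_def by simp
    have "ln(q\<^sup>2/p\<^sup>2) < b*(p-q)" using bb pmq unfolding B1e by (simp add: pos_divide_less_eq)
    hence kGs: "q\<^sup>2*E2 < p\<^sup>2*E1" unfolding E1_def E2_def using keyG_strict[OF p0] q0 by simp
    have "(1/D)*p\<^sup>2*E1 + (-1/D)*q\<^sup>2*E2 = (p\<^sup>2*E1 - q\<^sup>2*E2)/D" using Dp by (simp add: field_simps)
    also have "\<dots> > 0" using kGs Dp by simp
    finally have Lpos: "(1/D)*p\<^sup>2*E1 + (-1/D)*q\<^sup>2*E2 > 0" .
    have "((\<lambda>x. deriv (deriv (Gfun \<mu> \<sigma> \<alpha> br)) x) \<longlongrightarrow> (1/D)*p\<^sup>2*E1 + (-1/D)*q\<^sup>2*E2) (at_left b)"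
      using lim2[OF Gy] unfolding E1_def E2_def .
    thus "\<exists>L>0. ((\<lambda>x. deriv (deriv (Gfun \<mu> \<sigma> \<alpha> br)) x) \<longlongrightarrow> L)
                      (at_left (max br (bstar \<mu> \<sigma> \<alpha>)))"
      using Lpos unfolding b_def B1_def by blast
  qed
  define B2 where "B2 = bstarstar \<mu> \<sigma> \<alpha> k"
  have B2e: "B2 = (THE b. b > 0 \<and> p*exp(-q*b) - q*exp(-p*b) = k*(p-q))"
    unfolding B2_def bstarstar_def p_def q_def ..
  have "B2 > 0 \<and> p*exp(-q*B2) - q*exp(-p*B2) = k*(p-q)"
    unfolding B2e by (rule theI'[OF bss[OF p0 q0 pq assms(4)]])
  hence B2pos: "B2 > 0" and B2eq: "p*exp(-q*B2) - q*exp(-p*B2) = k*(p-q)" by auto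
  define c where "c = max br B2"
  have cB2: "c \<ge> B2" and c0: "c > 0" unfolding c_def using B2pos by auto
  define F1 where "F1 = exp(p*c)"
  define F2 where "F2 = exp(q*c)"
  have F1p: "F1 > 0" and F2p: "F2 > 0" unfolding F1_def F2_def by auto
  have F12: "F1 - F2 > 0" unfolding F1_def F2_def using c0 p0 q0
    by (simp add: mult_strict_right_mono)
  have phic: "p*exp(-q*c) - q*exp(-p*c) \<ge> k*(p-q)"
  proof (cases "c = B2")
    case True thus ?thesis using B2eq by simp
  next
    case False thus ?thesis using phi_mono[OF p0 q0 pq, of B2 c] B2pos cB2 B2eq by simp
  qed
  have Nid: "p*(1-k*F2)*F1 - q*(1-k*F1)*F2 = F1*F2*((p*exp(-q*c) - q*exp(-p*c)) - k*(p-q))"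
  proof -
    have 1: "F2*exp(-q*c) = 1" unfolding F2_def by (simp add: exp_add[symmetric])
    have 2: "F1*exp(-p*c) = 1" unfolding F1_def by (simp add: exp_add[symmetric])
    have "F1*F2*((p*exp(-q*c) - q*exp(-p*c)) - k*(p-q))
        = p*F1*(F2*exp(-q*c)) - q*F2*(F1*exp(-p*c)) - k*(p-q)*F1*F2" by (simp add: algebra_simps)
    also have "\<dots> = p*(1-k*F2)*F1 - q*(1-k*F1)*F2" unfolding 1 2 by (simp add: algebra_simps)
    finally show ?thesis ..
  qed
  have Nnn: "p*(1-k*F2)*F1 - q*(1-k*F1)*F2 \<ge> 0" unfolding Nid using phic F1p F2p by simp
  have HH: "\<alpha>*((1/(F1-F2))*((1-k*F2)/p*F1 - (1-k*F1)/q*F2)) - \<mu>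
       = \<sigma>\<^sup>2/2*((p*(1-k*F2)*F1 - q*(1-k*F1)*F2)/(F1-F2))"
    using algH[OF ap aq] p0 q0 F12 by simp
  have Hx: "Hfun \<mu> \<sigma> \<alpha> k br x = x - c + (1/(F1-F2))*((1-k*F2)/p*F1 - (1-k*F1)/q*F2)" if "x > c" for x
    using that unfolding Hfun_def Let_def p_def[symmetric] q_def[symmetric] B2_def[symmetric]
      c_def[symmetric] F1_def[symmetric] F2_def[symmetric] by simp
  have Hy: "\<forall>y<c. Hfun \<mu> \<sigma> \<alpha> k br y = ((1/(F1-F2))*((1-k*F2)/p))*exp(p*y) + (-(1/(F1-F2))*((1-k*F1)/q))*exp(q*y)"
  proof (intro allI impI)
    fix y :: real assume "y < c"
    hence "Hfun \<mu> \<sigma> \<alpha> k br y = (1/(F1-F2))*((1-k*F2)/p*exp(p*y) - (1-k*F1)/q*exp(q*y))"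
      unfolding Hfun_def Let_def p_def[symmetric] q_def[symmetric] B2_def[symmetric]
        c_def[symmetric] F1_def[symmetric] F2_def[symmetric] by simp
    also have "\<dots> = ((1/(F1-F2))*((1-k*F2)/p))*exp(p*y) + (-(1/(F1-F2))*((1-k*F1)/q))*exp(q*y)"
      by (rule lin_aux)
    finally show "Hfun \<mu> \<sigma> \<alpha> k br y = ((1/(F1-F2))*((1-k*F2)/p))*exp(p*y) + (-(1/(F1-F2))*((1-k*F1)/q))*exp(q*y)" .
  qed
  have part3: "\<forall>x\<ge>0. x > max br (bstarstar \<mu> \<sigma> \<alpha> k) \<longrightarrow> \<mu> - \<alpha> * Hfun \<mu> \<sigma> \<alpha> k br x \<le> 0"
  proof (intro allI impI)
    fix x :: real assume "x \<ge> 0" "x > max br (bstarstar \<mu> \<sigma> \<alpha> k)"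
    hence xc: "x > c" unfolding c_def B2_def by simp
    have "\<sigma>\<^sup>2/2*((p*(1-k*F2)*F1 - q*(1-k*F1)*F2)/(F1-F2)) \<ge> 0" using Nnn F12 by simp
    hence "\<alpha>*((1/(F1-F2))*((1-k*F2)/p*F1 - (1-k*F1)/q*F2)) \<ge> \<mu>" using HH by simp
    moreover have "\<alpha>*(x - c) \<ge> 0" using xc assms(3) by simp
    ultimately show "\<mu> - \<alpha> * Hfun \<mu> \<sigma> \<alpha> k br x \<le> 0" unfolding Hx[OF xc] by (simp add: algebra_simps)
  qed
  have part4: "br > bstarstar \<mu> \<sigma> \<alpha> k \<longrightarrow>
            (\<exists>L>0. ((\<lambda>x. deriv (deriv (Hfun \<mu> \<sigma> \<alpha> k br)) x) \<longlongrightarrow> L)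
                      (at_left (max br (bstarstar \<mu> \<sigma> \<alpha> k))))"
  proof
    assume "br > bstarstar \<mu> \<sigma> \<alpha> k"
    hence cc: "c > B2" unfolding c_def B2_def by simp
    have phis: "p*exp(-q*c) - q*exp(-p*c) > k*(p-q)"
      using phi_mono[OF p0 q0 pq, of B2 c] B2pos cc B2eq by simp
    have Npos: "p*(1-k*F2)*F1 - q*(1-k*F1)*F2 > 0" unfolding Nid using phis F1p F2p by simp
    have "((1/(F1-F2))*((1-k*F2)/p))*p\<^sup>2*F1 + (-(1/(F1-F2))*((1-k*F1)/q))*q\<^sup>2*F2
        = (p*(1-k*F2)*F1 - q*(1-k*F1)*F2)/(F1-F2)" using aux2[of p q "1/(F1-F2)" "1-k*F2" F1 "1-k*F1" F2] p0 q0 by simp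
    also have "\<dots> > 0" using Npos F12 by simp
    finally have Lpos: "((1/(F1-F2))*((1-k*F2)/p))*p\<^sup>2*F1 + (-(1/(F1-F2))*((1-k*F1)/q))*q\<^sup>2*F2 > 0" .
    have "((\<lambda>x. deriv (deriv (Hfun \<mu> \<sigma> \<alpha> k br)) x) \<longlongrightarrow>
       ((1/(F1-F2))*((1-k*F2)/p))*p\<^sup>2*F1 + (-(1/(F1-F2))*((1-k*F1)/q))*q\<^sup>2*F2) (at_left c)"
      using lim2[OF Hy] unfolding F1_def F2_def .
    thus "\<exists>L>0. ((\<lambda>x. deriv (deriv (Hfun \<mu> \<sigma> \<alpha> k br)) x) \<longlongrightarrow> L)
                      (at_left (max br (bstarstar \<mu> \<sigma> \<alpha> k)))"
      using Lpos unfolding c_def B2_def by blast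
  qed
  show ?thesis using part1 part2 part3 part4 by blast
qed

end
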